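(* Let $(\Gamma,\psi)$ be an $H$-asymptotic couple with asymptotic integration, and let $S$ be a nonempty convex subset of $\Gamma$ without a greatest element which has the yardstick property. Then $S$ is jammed if and only if $S^{\downarrow}=\Gamma^{<}$.
   Context: An asymptotic couple is a pair $(\Gamma,\psi)$ with $\Gamma$ an ordered abelian group and $\psi:\Gamma\setminus\{0\}\to\Gamma$ such that for all nonzero $\alpha,\beta$: $\alpha+\beta\ne0\Rightarrow\psi(\alpha+\beta)\ge\min(\psi(\alpha),\psi(\beta))$; $\psi(k\alpha)=\psi(\alpha)$ for $k\in\mathbb{Z}\setminus\{0\}$; $\alpha>0\Rightarrow\alpha+\psi(\alpha)>\psi(\beta)$. $H$-asymptotic: $0<\alpha\le\beta\Rightarrow\psi(\alpha)\ge\psi(\beta)$. Write $\gamma'=\gamma+\psi(\gamma)$. Asymptotic integration: every $\alpha\in\Gamma$ equals $\gamma'$ for some $\gamma\ne0$, necessarily unique, denoted $\int\alpha$. Contraction map: $\chi(\alpha)=\int\psi(\alpha)$ for $\alpha\ne0$, $\chi(0)=0$. Yardstick property of a nonempty convex $S$ without greatest element: there is $\beta\in S$ with $\gamma-\chi(\gamma)\in S$ for all $\gamma\in S$ with $\gamma>\beta$. $S^{\downarrow}=\{\delta\in\Gamma:\delta\le\sigma\text{ for some }\sigma\in S\}$, $\Gamma^{<}=\{\gamma\in\Gamma:\gamma<0\}$. A set $S\subseteq\Gamma$ is jammed if $S\ne\emptyset$, $S$ has no greatest element, and for every convex subgroup $\Delta\ne\{0\}$ of $\Gamma$ there is $\gamma_0\in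 S$ such that $\gamma_1-\gamma_0\in\Delta$ for every $\gamma_1\in S$ with $\gamma_1>\gamma_0$. *)

theory Defs
  imports Main
begin

(* Gamma is modelled as a type 'a of class linordered_ab_group_add (ordered abelian group);
   psi is a total function whose value at 0 is irrelevant (only used on nonzero arguments). *)

definition zsmul :: "int \<Rightarrow> 'a::ab_group_add \<Rightarrow> 'a" where
  "zsmul k a = (if 0 \<le> k then (((+) a) ^^ nat k) 0 else - ((((+) a) ^^ nat (- k)) 0))"

definition asymptotic_couple :: "('a::linordered_ab_group_add \<Rightarrow> 'a) \<Rightarrow> bool" where
  "asymptotic_couple \<psi> \<longleftrightarrow>
     (\<forall>\<alpha> \<beta>. \<alpha> \<noteq> 0 \<longrightarrow> \<beta> \<noteq> 0 \<longrightarrow> \<alpha> + \<beta> \<noteq> 0 \<longrightarrow> \<psi> (\<alpha> + \<beta>) \<ge> min (\<psi> \<alpha>) (\<psi> \<beta>)) \<and>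
     (\<forall>\<alpha> (k::int). \<alpha> \<noteq> 0 \<longrightarrow> k \<noteq> 0 \<longrightarrow> \<psi> (zsmul k \<alpha>) = \<psi> \<alpha>) \<and>
     (\<forall>\<alpha> \<beta>. \<alpha> \<noteq> 0 \<longrightarrow> \<beta> \<noteq> 0 \<longrightarrow> \<alpha> > 0 \<longrightarrow> \<alpha> + \<psi> \<alpha> > \<psi> \<beta>)"

definition H_asymptotic :: "('a::linordered_ab_group_add \<Rightarrow> 'a) \<Rightarrow> bool" where
  "H_asymptotic \<psi> \<longleftrightarrow> (\<forall>\<alpha> \<beta>. 0 < \<alpha> \<longrightarrow> \<alpha> \<le> \<beta> \<longrightarrow> \<psi> \<alpha> \<ge> \<psi> \<beta>)"

definition has_asymptotic_integration :: "('a::linordered_ab_group_add \<Rightarrow> 'a) \<Rightarrow> bool" where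
  "has_asymptotic_integration \<psi> \<longleftrightarrow> (\<forall>\<alpha>. \<exists>\<gamma>. \<gamma> \<noteq> 0 \<and> \<alpha> = \<gamma> + \<psi> \<gamma>)"

definition asym_int :: "('a::linordered_ab_group_add \<Rightarrow> 'a) \<Rightarrow> 'a \<Rightarrow> 'a" where
  "asym_int \<psi> \<alpha> = (THE \<gamma>. \<gamma> \<noteq> 0 \<and> \<alpha> = \<gamma> + \<psi> \<gamma>)"

definition contraction :: "('a::linordered_ab_group_add \<Rightarrow> 'a) \<Rightarrow> 'a \<Rightarrow> 'a" where
  "contraction \<psi> \<alpha> = (if \<alpha> = 0 then 0 else asym_int \<psi> (\<psi> \<alpha>))"

definition convex_set :: "'a::linorder set \<Rightarrow> bool" where
  "convex_set S \<longleftrightarrow> (\<forall>a\<in>S. \<forall>b\<in>S. \<forall>c. a \<le> c \<and> c \<le> b \<longrightarrow> c \<in> S)"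

definition no_greatest :: "'a::linorder set \<Rightarrow> bool" where
  "no_greatest S \<longleftrightarrow> (\<forall>a\<in>S. \<exists>b\<in>S. a < b)"

definition yardstick :: "('a::linordered_ab_group_add \<Rightarrow> 'a) \<Rightarrow> 'a set \<Rightarrow> bool" where
  "yardstick \<psi> S \<longleftrightarrow> (\<exists>\<beta>\<in>S. \<forall>\<gamma>\<in>S. \<gamma> > \<beta> \<longrightarrow> \<gamma> - contraction \<psi> \<gamma> \<in> S)"

definition downward_closure :: "'a::linorder set \<Rightarrow> 'a set" where
  "downward_closure S = {\<delta>. \<exists>\<sigma>\<in>S. \<delta> \<le> \<sigma>}"

definition convex_subgroup :: "'a::linordered_ab_group_add set \<Rightarrow> bool" where
  "convex_subgroup D \<longleftrightarrow> 0 \<in> D \<and> (\<forall>a\<in>D. \<forall>b\<in>D. a + b \<in> D) \<and> (\<forall>a\<in>D. - a \<in> D)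
     \<and> convex_set D"

definition jammed :: "'a::linordered_ab_group_add set \<Rightarrow> bool" where
  "jammed S \<longleftrightarrow> S \<noteq> {} \<and> no_greatest S \<and>
     (\<forall>D. convex_subgroup D \<and> D \<noteq> {0} \<longrightarrow>
        (\<exists>\<gamma>0\<in>S. \<forall>\<gamma>1\<in>S. \<gamma>1 > \<gamma>0 \<longrightarrow> \<gamma>1 - \<gamma>0 \<in> D))"

end

theory Submission
  imports Defs
begin

definition rep :: "'a::ab_group_add \<Rightarrow> nat \<Rightarrow> 'a" where
  "rep a n = (((+) a) ^^ n) 0"

lemma rep_0[simp]: "rep a 0 = 0" by (simp add: rep_def)
lemma rep_Suc[simp]: "rep a (Suc n) = a + rep a n" by (simp add: rep_def)

lemma rep_add: "rep a (n+m) = rep a n + rep a m"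
  by (induction n) (simp_all add: add.assoc)

lemma rep_nonneg: "(a::'a::linordered_ab_group_add) \<ge> 0 \<Longrightarrow> rep a n \<ge> 0"
  by (induction n) simp_all

lemma zsmul_nat: "zsmul (int n) a = rep a n" by (simp add: zsmul_def rep_def)
lemma zsmul_m1: "zsmul (-1) a = - a" by (simp add: zsmul_def)

definition aa :: "'a::linordered_ab_group_add \<Rightarrow> 'a" where
  "aa x = (if 0 \<le> x then x else - x)"

lemma aa_nonneg[simp]: "0 \<le> aa x" by (auto simp: aa_def)
lemma aa_neg[simp]: "aa (- x) = aa x" by (auto simp: aa_def)
lemma aa_0[simp]: "aa x = 0 \<longleftrightarrow> x = 0" by (auto simp: aa_def)
lemma aa_zero[simp]: "aa 0 = 0" by (simp add: aa_def)
lemma aa_negv: assumes "x < 0" shows "aa x = - x"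
proof -
  have "\<not> 0 \<le> x" using assms by (simp add: not_le)
  then show ?thesis by (simp add: aa_def)
qed
lemma aa_posv: assumes "0 \<le> x" shows "aa x = x" using assms by (simp add: aa_def)
lemma aa_pos: "x \<noteq> 0 \<Longrightarrow> 0 < aa x" by (auto simp: aa_def)
lemma aa_ge1: "x \<le> aa x" by (auto simp: aa_def)
lemma aa_ge2: "- x \<le> aa x" by (auto simp: aa_def)
lemma aa_cases: "aa x = x \<or> aa x = - x" by (auto simp: aa_def)
lemma aa_tri: "aa (a + b) \<le> aa a + aa b"
proof -
  have "a + b \<le> aa a + aa b" by (intro add_mono aa_ge1)
  moreover have "- (a + b) \<le> aa a + aa b" unfolding minus_add_distrib
    by (intro add_mono aa_ge2)
  ultimately show ?thesis using aa_cases[of "a+b"] by auto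
qed

lemma aa_between: assumes "a \<le> c" "c \<le> b" shows "aa c \<le> aa a + aa b"
proof -
  have "c \<le> aa a + aa b"
    using assms(2) aa_ge1[of b] aa_nonneg[of a] by (meson add_increasing order_trans)
  moreover have "- c \<le> aa a + aa b"
    using assms(1) aa_ge2[of a] aa_nonneg[of b] by (meson add_increasing2 neg_le_iff_le order_trans)
  ultimately show ?thesis using aa_cases[of c] by auto
qed

context
  fixes \<psi> :: "'a::linordered_ab_group_add \<Rightarrow> 'a"
  assumes AC: "asymptotic_couple \<psi>" and H: "H_asymptotic \<psi>"
    and AI: "has_asymptotic_integration \<psi>"
begin

lemma ax3: "\<alpha> \<noteq> 0 \<Longrightarrow> \<beta> \<noteq> 0 \<Longrightarrow> \<alpha> > 0 \<Longrightarrow> \<alpha> + \<psi> \<alpha> > \<psi> \<beta>"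
  using AC unfolding asymptotic_couple_def by blast

lemma psi_zs: "\<alpha> \<noteq> 0 \<Longrightarrow> k \<noteq> 0 \<Longrightarrow> \<psi> (zsmul k \<alpha>) = \<psi> \<alpha>"
  using AC unfolding asymptotic_couple_def by blast

lemma psi_neg: "x \<noteq> 0 \<Longrightarrow> \<psi> (- x) = \<psi> x"
  using psi_zs[of x "-1"] by (simp add: zsmul_m1)

lemma psi_abs: "x \<noteq> 0 \<Longrightarrow> \<psi> (aa (x)) = \<psi> x"
  by (cases "x \<ge> 0") (auto simp: psi_neg aa_def)

lemma psi_rep: "x \<noteq> 0 \<Longrightarrow> n \<noteq> 0 \<Longrightarrow> \<psi> (rep x n) = \<psi> x"
  using psi_zs[of x "int n"] by (simp add: zsmul_nat)

lemma Habs: "x \<noteq> 0 \<Longrightarrow> (aa (x)) \<le> (aa (y)) \<Longrightarrow> \<psi> y \<le> \<psi> x"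
proof -
  assume a: "x \<noteq> 0" "(aa (x)) \<le> (aa (y))"
  then have "y \<noteq> 0" by (metis aa_0 aa_nonneg antisym)
  have "\<psi> (aa (y)) \<le> \<psi> (aa (x))" using H a aa_pos[of x] unfolding H_asymptotic_def by blast
  then show ?thesis using a \<open>y \<noteq> 0\<close> by (simp add: psi_abs)
qed

lemma neg_mono: "x < y \<Longrightarrow> y < 0 \<Longrightarrow> x + \<psi> x < y + \<psi> y"
proof -
  assume a: "x < y" "y < 0"
  have "x < 0" using a by (rule less_trans)
  then have "aa y = - y" "aa x = - x" using a by (auto simp: aa_def)
  then have "aa y \<le> aa x" using a by simp
  then have "\<psi> x \<le> \<psi> y" using Habs[of y x] a by auto
  then show ?thesis using a by (meson add_less_le_mono order_refl)
qed

lemma chi_props: assumes "\<alpha> \<noteq> 0"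
  shows "contraction \<psi> \<alpha> < 0 \<and> contraction \<psi> \<alpha> + \<psi> (contraction \<psi> \<alpha>) = \<psi> \<alpha>"
proof -
  obtain g where g: "g \<noteq> 0" "\<psi> \<alpha> = g + \<psi> g" using AI unfolding has_asymptotic_integration_def by blast
  have neg: "g' < 0" if "g' \<noteq> 0" "\<psi> \<alpha> = g' + \<psi> g'" for g'
  proof (rule ccontr)
    assume "\<not> g' < 0"
    then have "g' > 0" using that by auto
    then have "g' + \<psi> g' > \<psi> \<alpha>" using ax3 that assms by blast
    then show False using that by simp
  qed
  have uniq: "g' = g" if "g' \<noteq> 0" "\<psi> \<alpha> = g' + \<psi> g'" for g'
  proof -
    have "g' < 0" "g < 0" using neg that g by auto
    then show ?thesis using neg_mono[of g' g] neg_mono[of g g'] that g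
      by (metis less_irrefl linorder_neqE)
  qed
  have "asym_int \<psi> (\<psi> \<alpha>) = g"
    unfolding asym_int_def
  proof (rule the_equality)
    show "g \<noteq> 0 \<and> \<psi> \<alpha> = g + \<psi> g" using g by blast
  next
    fix g' assume "g' \<noteq> 0 \<and> \<psi> \<alpha> = g' + \<psi> g'"
    then show "g' = g" using uniq by blast
  qed
  then have "contraction \<psi> \<alpha> = g" using assms by (simp add: contraction_def)
  then show ?thesis using g(2) neg[OF g] by simp
qed

lemma chi_mono: "a \<noteq> 0 \<Longrightarrow> b \<noteq> 0 \<Longrightarrow> \<psi> a \<le> \<psi> b \<Longrightarrow> contraction \<psi> a \<le> contraction \<psi> b"
  using chi_props[of a] chi_props[of b] neg_mono[of "contraction \<psi> b" "contraction \<psi> a"]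
  by (metis leI not_le)

lemma F1: assumes "\<alpha> \<noteq> 0" shows "rep (aa (contraction \<psi> \<alpha>)) n < (aa (\<alpha>))"
proof (rule ccontr)
  let ?g = "contraction \<psi> \<alpha>"
  assume "\<not> ?thesis"
  then have le: "(aa (\<alpha>)) \<le> rep (aa (?g)) n" by simp
  have g: "?g < 0" "?g + \<psi> ?g = \<psi> \<alpha>" using chi_props[OF assms] by auto
  have "n \<noteq> 0" using le aa_pos[OF assms] by (cases n) auto
  then have pr: "\<psi> (rep (aa (?g)) n) = \<psi> ?g" using g by (simp add: psi_rep psi_abs)
  have "(aa (\<alpha>)) \<le> aa (rep (aa ?g) n)" using le aa_ge1 order_trans by blast
  then have "\<psi> (rep (aa (?g)) n) \<le> \<psi> \<alpha>" using Habs[of \<alpha>] assms by auto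
  then show False using pr g by (metis add_less_same_cancel2 not_le)
qed

lemma core:
  assumes jam: "jammed S" and b: "\<beta> \<in> S" and yd: "\<forall>\<gamma>\<in>S. \<gamma> > \<beta> \<longrightarrow> \<gamma> - contraction \<psi> \<gamma> \<in> S"
    and d: "d \<noteq> 0" and t: "t \<in> S" "t \<ge> \<beta>"
    and tl: "\<forall>\<gamma>\<in>S. \<gamma> \<ge> t \<longrightarrow> \<gamma> \<noteq> 0 \<and> \<psi> \<gamma> \<le> \<psi> d"
  shows False
proof -
  define c where "c = - contraction \<psi> d"
  have cpos: "c > 0" using chi_props[OF d] by (simp add: c_def)
  define e where "e = contraction \<psi> c"
  have e0: "e \<noteq> 0" using chi_props[of c] cpos unfolding e_def by (metis less_irrefl)
  have cc: "aa c = c" using cpos by (simp add: aa_def less_imp_le)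
  have F: "rep (aa (e)) n < c" for n using F1[of c] cpos cc unfolding e_def by (metis less_irrefl)
  define D where "D = {x. \<exists>n. (aa (x)) \<le> rep (aa (e)) n}"
  have cs: "convex_subgroup D"
    unfolding convex_subgroup_def convex_set_def
  proof (intro conjI ballI allI impI)
    show "0 \<in> D" unfolding D_def by (auto intro!: exI[of _ 0])
  next
    fix a b assume "a \<in> D" "b \<in> D"
    then obtain n m where "(aa (a)) \<le> rep (aa (e)) n" "(aa (b)) \<le> rep (aa (e)) m" unfolding D_def by auto
    then have "(aa (a + b)) \<le> rep (aa (e)) (n+m)" unfolding rep_add
      by (meson aa_tri add_mono order_trans)
    then show "a + b \<in> D" unfolding D_def by auto
  next
    fix a assume "a \<in> D" then show "- a \<in> D" unfolding D_def by auto
  next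
    fix a b c assume "a \<in> D" "b \<in> D" "a \<le> c \<and> c \<le> b"
    then obtain n m where nm: "(aa (a)) \<le> rep (aa (e)) n" "(aa (b)) \<le> rep (aa (e)) m" unfolding D_def by auto
    have "(aa (c)) \<le> (aa (a)) + (aa (b))" using \<open>a \<le> c \<and> c \<le> b\<close> aa_between by blast
    then have "(aa (c)) \<le> rep (aa (e)) (n+m)" unfolding rep_add using nm
      by (meson add_mono order_trans)
    then show "c \<in> D" unfolding D_def by auto
  qed
  have "e \<in> D" unfolding D_def by (auto intro!: exI[of _ 1])
  then have "D \<noteq> {0}" using e0 by auto
  then obtain \<gamma>0 where g0: "\<gamma>0 \<in> S" "\<forall>\<gamma>1\<in>S. \<gamma>1 > \<gamma>0 \<longrightarrow> \<gamma>1 - \<gamma>0 \<in> D"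
    using jam cs unfolding jammed_def by blast
  have "max \<gamma>0 t \<in> S" using g0 t by (simp add: max_def)
  then obtain \<gamma> where g: "\<gamma> \<in> S" "\<gamma> > max \<gamma>0 t" using jam unfolding jammed_def no_greatest_def by blast
  have gn: "\<gamma> \<noteq> 0" "\<psi> \<gamma> \<le> \<psi> d" using tl g by auto
  have chg: "contraction \<psi> \<gamma> < 0" using chi_props[OF gn(1)] by simp
  have cm: "contraction \<psi> \<gamma> \<le> contraction \<psi> d" using chi_mono[OF gn(1) d gn(2)] .
  have "\<gamma> > \<beta>" using g t by auto
  then have g1: "\<gamma> - contraction \<psi> \<gamma> \<in> S" using yd g by auto
  have "\<gamma> < \<gamma> - contraction \<psi> \<gamma>" using chg by (simp add: less_diff_eq)
  moreover have "\<gamma>0 < \<gamma>" using g by simp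
  ultimately have "\<gamma> - contraction \<psi> \<gamma> > \<gamma>0" by (rule less_trans[rotated])
  then have A: "(\<gamma> - contraction \<psi> \<gamma>) - \<gamma>0 \<in> D" using g0 g1 by auto
  have B: "\<gamma> - \<gamma>0 \<in> D" using g0 g by auto
  have "(\<gamma> - contraction \<psi> \<gamma>) - \<gamma>0 + - (\<gamma> - \<gamma>0) \<in> D"
    using A B cs unfolding convex_subgroup_def by blast
  then have "- contraction \<psi> \<gamma> \<in> D" by (simp add: algebra_simps)
  then obtain n where "(aa (- contraction \<psi> \<gamma>)) \<le> rep (aa (e)) n" unfolding D_def by auto
  moreover have "aa (contraction \<psi> \<gamma>) = - contraction \<psi> \<gamma>" using chg by (rule aa_negv)
  moreover have "c \<le> - contraction \<psi> \<gamma>" using cm by (simp add: c_def)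
  ultimately have "c \<le> rep (aa (e)) n" by simp
  then show False using F[of n] by simp
qed

end

theorem lemma3p17:
  fixes \<psi> :: "'a::linordered_ab_group_add \<Rightarrow> 'a" and S :: "'a set"
  assumes "asymptotic_couple \<psi>" and "H_asymptotic \<psi>" and "has_asymptotic_integration \<psi>"
    and "S \<noteq> {}" and "convex_set S" and "no_greatest S" and "yardstick \<psi> S"
  shows "jammed S \<longleftrightarrow> downward_closure S = {\<gamma>. \<gamma> < 0}"
proof
  assume jam: "jammed S"
  obtain \<beta> where b: "\<beta> \<in> S" "\<forall>\<gamma>\<in>S. \<gamma> > \<beta> \<longrightarrow> \<gamma> - contraction \<psi> \<gamma> \<in> S"
    using assms(7) unfolding yardstick_def by blast
  have neg: "\<sigma> < 0" if "\<sigma> \<in> S" for \<sigma>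
  proof (rule ccontr)
    assume "\<not> \<sigma> < 0"
    then have s0: "0 \<le> \<sigma>" by (simp add: not_less)
    have "max \<sigma> \<beta> \<in> S" using that b by (cases "\<sigma> \<le> \<beta>") (simp_all add: max_def)
    then obtain t where t: "t \<in> S" "t > max \<sigma> \<beta>" using assms(6) unfolding no_greatest_def by blast
    have "\<sigma> < t" "\<beta> < t" using t(2) by simp_all
    then have tp: "t > 0" and tb: "\<beta> \<le> t" using s0 by (auto intro: le_less_trans less_imp_le)
    have tnz: "t \<noteq> 0" using tp by simp
    have tl: "\<forall>\<gamma>\<in>S. \<gamma> \<ge> t \<longrightarrow> \<gamma> \<noteq> 0 \<and> \<psi> \<gamma> \<le> \<psi> t"
    proof (intro ballI impI conjI)
      fix \<gamma> assume "\<gamma> \<in> S" "\<gamma> \<ge> t"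
      then have "0 < \<gamma>" using tp by (rule_tac less_le_trans) 
      then show "\<gamma> \<noteq> 0" by simp
      show "\<psi> \<gamma> \<le> \<psi> t" using assms(2) tp \<open>\<gamma> \<ge> t\<close> unfolding H_asymptotic_def by blast
    qed
    show False using core[OF assms(1-3) jam b(1) b(2) tnz t(1) tb tl] .
  qed
  have cof: "\<exists>\<sigma>\<in>S. \<delta> \<le> \<sigma>" if "\<delta> < 0" for \<delta>
  proof (rule ccontr)
    assume "\<not> ?thesis"
    then have lt: "\<forall>\<sigma>\<in>S. \<sigma> < \<delta>" by (auto simp: not_le)
    have dnz: "\<delta> \<noteq> 0" using that by simp
    have tl: "\<forall>\<gamma>\<in>S. \<gamma> \<ge> \<beta> \<longrightarrow> \<gamma> \<noteq> 0 \<and> \<psi> \<gamma> \<le> \<psi> \<delta>"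
    proof (intro ballI impI conjI)
      fix \<gamma> assume "\<gamma> \<in> S" "\<gamma> \<ge> \<beta>"
      then have gd: "\<gamma> < \<delta>" using lt by blast
      then have g0: "\<gamma> < 0" using that by (rule less_trans)
      then show "\<gamma> \<noteq> 0" by simp
      have "aa \<delta> = - \<delta>" "aa \<gamma> = - \<gamma>" using that g0 by (simp_all add: aa_negv)
      then have "(aa (\<delta>)) \<le> (aa (\<gamma>))" using gd by simp
      then show "\<psi> \<gamma> \<le> \<psi> \<delta>" using Habs[OF assms(1-3) dnz] by blast
    qed
    show False using core[OF assms(1-3) jam b(1) b(2) dnz b(1) order_refl tl] .
  qed
  show "downward_closure S = {\<gamma>. \<gamma> < 0}"
  proof (intro set_eqI iffI)
    fix x :: 'a assume "x \<in> downward_closure S"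
    then obtain \<sigma> where "\<sigma> \<in> S" "x \<le> \<sigma>" unfolding downward_closure_def by blast
    then show "x \<in> {\<gamma>. \<gamma> < 0}" using neg[of \<sigma>] by (simp add: le_less_trans)
  next
    fix x :: 'a assume "x \<in> {\<gamma>. \<gamma> < 0}"
    then show "x \<in> downward_closure S" using cof[of x] unfolding downward_closure_def by simp
  qed
next
  assume dc: "downward_closure S = {\<gamma>. \<gamma> < 0}"
  have neg: "\<sigma> < 0" if "\<sigma> \<in> S" for \<sigma>
  proof -
    have "\<sigma> \<in> downward_closure S" using that unfolding downward_closure_def by blast
    then show ?thesis using dc by simp
  qed
  show "jammed S" unfolding jammed_def
  proof (intro conjI allI impI assms(4) assms(6))
    fix D :: "'a set" assume D: "convex_subgroup D \<and> D \<noteq> {0}"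
    then have cD: "convex_subgroup D" by simp
    have "0 \<in> D" using cD unfolding convex_subgroup_def by blast
    then obtain x where x: "x \<in> D" "x \<noteq> 0" using D by blast
    have pD: "(aa (x)) \<in> D"
    proof (cases "0 \<le> x")
      case True then show ?thesis using x by (simp add: aa_posv)
    next
      case False then have "x < 0" by (simp add: not_le)
      then show ?thesis using x cD unfolding convex_subgroup_def by (simp add: aa_negv)
    qed
    have "- (aa (x)) < 0" using aa_pos[OF x(2)] by simp
    then have "- aa x \<in> downward_closure S" using dc by simp
    then obtain \<sigma> where s: "\<sigma> \<in> S" "- (aa (x)) \<le> \<sigma>" unfolding downward_closure_def by blast
    show "\<exists>\<gamma>0\<in>S. \<forall>\<gamma>1\<in>S. \<gamma>0 < \<gamma>1 \<longrightarrow> \<gamma>1 - \<gamma>0 \<in> D"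
    proof (intro bexI[OF _ s(1)] ballI impI)
      fix \<gamma>1 assume g1: "\<gamma>1 \<in> S" "\<sigma> < \<gamma>1"
      then have "\<gamma>1 < 0" using neg by blast
      then have "\<gamma>1 - \<sigma> \<le> - \<sigma>" by (simp add: diff_le_eq)
      also have "- \<sigma> \<le> aa x" using s(2) by (simp add: minus_le_iff)
      finally have le1: "\<gamma>1 - \<sigma> \<le> aa x" .
      have le0: "0 \<le> \<gamma>1 - \<sigma>" using g1(2) by simp
      show "\<gamma>1 - \<sigma> \<in> D" using cD \<open>0 \<in> D\<close> pD le0 le1 unfolding convex_subgroup_def convex_set_def by blast
    qed
  qed
qed

end
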